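(* Let $G$ be a locally soluble group in which every non-abelian subgroup $H$ satisfies $C_G(H)\le H$. If the hypercenter of $G$ contains two non-commuting elements of finite order, then $G$ is locally finite.
   Context: The hypercenter of $G$ is the final term of the (transfinite) upper central series of $G$. $C_G(H)$ denotes the centralizer of $H$ in $G$. *)

theory Defs
  imports "HOL-Algebra.Algebra"
begin

definition centralizer_set :: "('a, 'b) monoid_scheme \<Rightarrow> 'a set \<Rightarrow> 'a set" where
  "centralizer_set G H = {g \<in> carrier G. \<forall>h \<in> H. g \<otimes>\<^bsub>G\<^esub> h = h \<otimes>\<^bsub>G\<^esub> g}"

text \<open>The hypercenter (last term of the transfinite upper central
  series, obtained by iterating this monotone operator transfinitely from {1}, taking unions
  at limits) is the least fixed point of this operator.\<close>
definition upper_central_step :: "('a, 'b) monoid_scheme \<Rightarrow> 'a set \<Rightarrow> 'a set" where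
  "upper_central_step G N = {\<one>\<^bsub>G\<^esub>} \<union>
     {g \<in> carrier G. \<forall>x \<in> carrier G.
        g \<otimes>\<^bsub>G\<^esub> x \<otimes>\<^bsub>G\<^esub> inv\<^bsub>G\<^esub> g \<otimes>\<^bsub>G\<^esub> inv\<^bsub>G\<^esub> x \<in> N}"

definition hypercenter :: "('a, 'b) monoid_scheme \<Rightarrow> 'a set" where
  "hypercenter G = lfp (upper_central_step G)"

definition locally_soluble :: "('a, 'b) monoid_scheme \<Rightarrow> bool" where
  "locally_soluble G \<longleftrightarrow>
     (\<forall>S. S \<subseteq> carrier G \<and> finite S \<longrightarrow> solvable (G\<lparr>carrier := generate G S\<rparr>))"

definition locally_finite_group :: "('a, 'b) monoid_scheme \<Rightarrow> bool" where
  "locally_finite_group G \<longleftrightarrow>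
     (\<forall>S. S \<subseteq> carrier G \<and> finite S \<longrightarrow> finite (generate G S))"

definition finite_order_elem :: "('a, 'b) monoid_scheme \<Rightarrow> 'a \<Rightarrow> bool" where
  "finite_order_elem G x \<longleftrightarrow> x \<in> carrier G \<and> (\<exists>n::nat. n > 0 \<and> x [^]\<^bsub>G\<^esub> n = \<one>\<^bsub>G\<^esub>)"

end

theory Submission
  imports Defs
begin


definition lprod :: "('a,'b) monoid_scheme \<Rightarrow> 'a list \<Rightarrow> 'a" where
  "lprod G ws = foldr (\<lambda>a b. a \<otimes>\<^bsub>G\<^esub> b) ws \<one>\<^bsub>G\<^esub>"

context group begin

lemma inv_cancel1 [simp]: "x \<in> carrier G \<Longrightarrow> y \<in> carrier G \<Longrightarrow> inv x \<otimes> (x \<otimes> y) = y"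
  by (simp add: m_assoc[symmetric])
lemma inv_cancel2 [simp]: "x \<in> carrier G \<Longrightarrow> y \<in> carrier G \<Longrightarrow> x \<otimes> (inv x \<otimes> y) = y"
  by (simp add: m_assoc[symmetric])

lemma lprod_simps [simp]: "lprod G [] = \<one>" "lprod G (a # ws) = a \<otimes> lprod G ws"
  by (simp_all add: lprod_def)

lemma lprod_closed [simp]: "set ws \<subseteq> carrier G \<Longrightarrow> lprod G ws \<in> carrier G"
  by (induction ws) auto

lemma lprod_append: "set u \<subseteq> carrier G \<Longrightarrow> set vs \<subseteq> carrier G \<Longrightarrow>
   lprod G (u @ vs) = lprod G u \<otimes> lprod G vs"
  by (induction u) (auto simp: m_assoc)

lemma lprod_replicate: "x \<in> carrier G \<Longrightarrow> lprod G (replicate n x) = x [^] n"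
  by (induction n) (auto, metis nat_pow_Suc nat_pow_Suc2)

lemma lprod_conj: "x \<in> carrier G \<Longrightarrow> set vs \<subseteq> carrier G \<Longrightarrow>
   lprod G (map (\<lambda>y. x \<otimes> y \<otimes> inv x) vs) = x \<otimes> lprod G vs \<otimes> inv x"
proof (induction vs)
  case Nil then show ?case by simp
next
  case (Cons a vs)
  then have IH: "lprod G (map (\<lambda>y. x \<otimes> y \<otimes> inv x) vs) = x \<otimes> lprod G vs \<otimes> inv x" by simp
  have "x \<otimes> a \<otimes> inv x \<otimes> (x \<otimes> lprod G vs \<otimes> inv x) = x \<otimes> a \<otimes> (inv x \<otimes> x) \<otimes> lprod G vs \<otimes> inv x"
    using Cons by (simp add: m_assoc)
  also have "\<dots> = x \<otimes> (a \<otimes> lprod G vs) \<otimes> inv x" using Cons by (simp add: m_assoc)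
  finally show ?case using IH by simp
qed

lemma lprod_move: "x \<in> carrier G \<Longrightarrow> set vs \<subseteq> carrier G \<Longrightarrow>
   lprod G (x # vs) = lprod G (map (\<lambda>y. x \<otimes> y \<otimes> inv x) vs) \<otimes> x"
  by (simp add: lprod_conj m_assoc)

lemma gather:
  assumes XX: "XX \<subseteq> carrier G" and cl: "\<And>a b. a \<in> XX \<Longrightarrow> b \<in> XX \<Longrightarrow> a \<otimes> b \<otimes> inv a \<in> XX"
    and x: "x \<in> XX"
  shows "set ws \<subseteq> XX \<Longrightarrow> j \<le> count_list ws x \<Longrightarrow>
     \<exists>ws'. set ws' \<subseteq> XX \<and> length ws' + j = length ws \<and> lprod G ws = lprod G ws' \<otimes> x [^] j"
proof (induction ws arbitrary: j)
  case Nil then show ?case by simp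
next
  case (Cons a vs)
  have xc: "x \<in> carrier G" using x XX by auto
  have vc: "set vs \<subseteq> carrier G" using Cons XX by auto
  show ?case
  proof (cases "j = 0")
    case True
    then show ?thesis using Cons.prems XX by (intro exI[of _ "a # vs"]) (auto simp: subset_iff)
  next
    case False
    show ?thesis
    proof (cases "a = x")
      case True
      then have "j - 1 \<le> count_list vs x" using Cons.prems by simp
      then obtain vs' where vs': "set vs' \<subseteq> XX" "length vs' + (j - 1) = length vs"
        "lprod G vs = lprod G vs' \<otimes> x [^] (j - 1)" using Cons.IH[of "j - 1"] Cons.prems by auto
      have vs'c: "set vs' \<subseteq> carrier G" using vs' XX by auto
      let ?ws = "map (\<lambda>y. x \<otimes> y \<otimes> inv x) vs'"
      have "set ?ws \<subseteq> XX" using vs' cl x by auto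
      moreover have "length ?ws + j = length (a # vs)" using vs' False by simp
      moreover have "lprod G (a # vs) = lprod G ?ws \<otimes> x [^] j"
      proof -
        have "lprod G (a # vs) = x \<otimes> lprod G vs' \<otimes> x [^] (j - 1)"
          using True vs' vs'c xc by (simp add: m_assoc)
        also have "\<dots> = lprod G ?ws \<otimes> x \<otimes> x [^] (j - 1)"
          using lprod_move[OF xc vs'c] by simp
        also have "\<dots> = lprod G ?ws \<otimes> x [^] j"
        proof -
          have "x \<otimes> x [^] (j - 1) = x [^] j"
            using False xc nat_pow_Suc2[of x "j - 1"] by simp
          moreover have "lprod G ?ws \<in> carrier G" using xc vs'c by (intro lprod_closed) auto
          ultimately show ?thesis using xc by (simp add: m_assoc)
        qed
        finally show ?thesis .
      qed
      ultimately show ?thesis by blast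
    next
      case False2: False
      then have "j \<le> count_list vs x" using Cons.prems by simp
      then obtain vs' where vs': "set vs' \<subseteq> XX" "length vs' + j = length vs"
        "lprod G vs = lprod G vs' \<otimes> x [^] j" using Cons.IH[of j] Cons.prems by auto
      have "set (a # vs') \<subseteq> XX" using vs' Cons.prems by auto
      moreover have "length (a # vs') + j = length (a # vs)" using vs' by simp
      moreover have "lprod G (a # vs) = lprod G (a # vs') \<otimes> x [^] j"
        using vs' Cons.prems XX xc lprod_closed[of vs'] by (auto simp: m_assoc subset_iff)
      ultimately show ?thesis by blast
    qed
  qed
qed

lemma shorten:
  assumes XX: "XX \<subseteq> carrier G" "finite XX" and cl: "\<And>a b. a \<in> XX \<Longrightarrow> b \<in> XX \<Longrightarrow> a \<otimes> b \<otimes> inv a \<in> XX"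
    and E: "(E::nat) > 0" "\<And>x. x \<in> XX \<Longrightarrow> x [^] E = \<one>"
  shows "set ws \<subseteq> XX \<longrightarrow> (\<exists>ws'. set ws' \<subseteq> XX \<and> length ws' \<le> card XX * E \<and> lprod G ws' = lprod G ws)"
proof (induction ws rule: length_induct)
  case (1 ws)
  show ?case
  proof
    assume ws: "set ws \<subseteq> XX"
    show "\<exists>ws'. set ws' \<subseteq> XX \<and> length ws' \<le> card XX * E \<and> lprod G ws' = lprod G ws"
    proof (cases "length ws \<le> card XX * E")
      case True then show ?thesis using ws by blast
    next
      case False
      have "\<exists>x\<in>XX. E \<le> count_list ws x"
      proof (rule ccontr)
        assume "\<not> ?thesis"
        then have "\<And>x. x \<in> XX \<Longrightarrow> count_list ws x \<le> E" by force
        then have "sum (count_list ws) XX \<le> card XX * E" using sum_bounded_above[of XX "count_list ws" E] by simp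
        then show False using sum_count_set[OF ws XX(2)] False by simp
      qed
      then obtain x where x: "x \<in> XX" "E \<le> count_list ws x" by blast
      obtain ws' where ws': "set ws' \<subseteq> XX" "length ws' + E = length ws" "lprod G ws = lprod G ws' \<otimes> x [^] E"
        using gather[OF XX(1) cl x(1) ws x(2)] by blast
      have "lprod G ws = lprod G ws'" using ws' E(2)[OF x(1)] XX(1) lprod_closed[of ws'] by auto
      moreover have "length ws' < length ws"
      proof -
        show ?thesis using ws' E(1) by simp
      qed
      ultimately show ?thesis using 1 ws'(1) by metis
    qed
  qed
qed

lemma generate_lprod:
  assumes XX: "XX \<subseteq> carrier G" and E: "(E::nat) > 0" "\<And>x. x \<in> XX \<Longrightarrow> x [^] E = \<one>"
  shows "g \<in> generate G XX \<Longrightarrow> \<exists>ws. set ws \<subseteq> XX \<and> lprod G ws = g"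
proof (induction rule: generate.induct)
  case one then show ?case by (intro exI[of _ "[]"]) simp
next
  case (incl h) then show ?case using XX by (intro exI[of _ "[h]"]) auto
next
  case (inv h)
  have hc: "h \<in> carrier G" using inv XX by auto
  have "h [^] (E - 1) \<otimes> h = \<one>" using E inv nat_pow_Suc[of h "E - 1"] by simp
  then have "inv h = h [^] (E - 1)" using hc by (simp add: inv_equality)
  then show ?case using inv hc by (intro exI[of _ "replicate (E - 1) h"]) (auto simp: lprod_replicate)
next
  case (eng h1 h2)
  then obtain u v where "set u \<subseteq> XX" "lprod G u = h1" "set v \<subseteq> XX" "lprod G v = h2" by blast
  then show ?case using XX by (intro exI[of _ "u @ v"]) (auto simp: lprod_append)
qed

theorem dietzmann:
  assumes XX: "XX \<subseteq> carrier G" "finite XX" and cl: "\<And>a b. a \<in> XX \<Longrightarrow> b \<in> XX \<Longrightarrow> a \<otimes> b \<otimes> inv a \<in> XX"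
    and tor: "\<And>x. x \<in> XX \<Longrightarrow> \<exists>e>0. x [^] (e::nat) = \<one>"
  shows "finite (generate G XX)"
proof -
  define ex where "ex x = (SOME e. e > 0 \<and> x [^] (e::nat) = \<one>)" for x
  have ex: "ex x > 0 \<and> x [^] ex x = \<one>" if "x \<in> XX" for x
    unfolding ex_def using someI_ex[OF tor[OF that]] .
  define E where "E = prod ex XX"
  have Epos: "E > 0" unfolding E_def using ex XX(2) by (simp add: prod_pos)
  have Eone: "x [^] E = \<one>" if x: "x \<in> XX" for x
  proof -
    have "ex x dvd E" unfolding E_def using x XX(2) by (intro dvd_prodI)
    then obtain k where "E = ex x * k" by blast
    then show ?thesis using ex[OF x] x XX(1) by (auto simp: nat_pow_pow[symmetric])
  qed
  have "generate G XX \<subseteq> lprod G ` {ws. set ws \<subseteq> XX \<and> length ws \<le> card XX * E}"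
  proof
    fix g assume "g \<in> generate G XX"
    then obtain ws where ws: "set ws \<subseteq> XX" "lprod G ws = g" using generate_lprod[OF XX(1) Epos Eone] by blast
    then obtain ws' where "set ws' \<subseteq> XX" "length ws' \<le> card XX * E" "lprod G ws' = g"
      using shorten[OF XX cl Epos Eone] by metis
    then show "g \<in> lprod G ` {ws. set ws \<subseteq> XX \<and> length ws \<le> card XX * E}" by blast
  qed
  moreover have "finite (lprod G ` {ws. set ws \<subseteq> XX \<and> length ws \<le> card XX * E})"
    using finite_lists_length_le[OF XX(2)] by blast
  ultimately show ?thesis by (rule finite_subset)
qed

end



definition comm :: "('a,'b) monoid_scheme \<Rightarrow> 'a \<Rightarrow> 'a \<Rightarrow> 'a" where
  "comm G a b = a \<otimes>\<^bsub>G\<^esub> b \<otimes>\<^bsub>G\<^esub> inv\<^bsub>G\<^esub> a \<otimes>\<^bsub>G\<^esub> inv\<^bsub>G\<^esub> b"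

definition rc :: "('a,'b) monoid_scheme \<Rightarrow> 'a set \<Rightarrow> 'a set" where
  "rc G N = {g \<in> carrier G. \<forall>h\<in>carrier G. comm G g h \<in> N}"

primrec zk :: "('a,'b) monoid_scheme \<Rightarrow> 'a set \<Rightarrow> nat \<Rightarrow> 'a set" where
  "zk G N 0 = N"
| "zk G N (Suc k) = zk G (rc G N) k"

context group begin

lemma comm_closed [simp]: "a \<in> carrier G \<Longrightarrow> b \<in> carrier G \<Longrightarrow> comm G a b \<in> carrier G"
  by (simp add: comm_def)

lemma rcos_eq_iff:
  assumes "subgroup N G" "x \<in> carrier G" "y \<in> carrier G"
  shows "N #> x = N #> y \<longleftrightarrow> x \<otimes> inv y \<in> N"
proof
  assume "N #> x = N #> y"
  then have "x \<in> N #> y" using rcos_self[OF assms(2,1)] by simp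
  then show "x \<otimes> inv y \<in> N" using subgroup.rcos_module_imp[OF assms(1) is_group assms(3)] by blast
next
  assume "x \<otimes> inv y \<in> N"
  then have "x \<in> N #> y" using subgroup.rcos_module_rev[OF assms(1) is_group assms(3,2)] by blast
  then show "N #> x = N #> y" using repr_independence[OF _ assms(3,1)] by simp
qed

lemma comm_mult:
  assumes "a \<in> carrier G" "b \<in> carrier G" "h \<in> carrier G"
  shows "comm G (a \<otimes> b) h = a \<otimes> comm G b h \<otimes> inv a \<otimes> comm G a h"
  using assms by (simp add: comm_def m_assoc inv_mult_group)

lemma comm_inv:
  assumes "a \<in> carrier G" "h \<in> carrier G"
  shows "comm G (inv a) h = inv a \<otimes> inv (comm G a h) \<otimes> a"
  using assms by (simp add: comm_def m_assoc inv_mult_group)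

lemma comm_conj:
  assumes "a \<in> carrier G" "x \<in> carrier G" "h \<in> carrier G"
  shows "comm G (x \<otimes> a \<otimes> inv x) h = x \<otimes> comm G a (inv x \<otimes> h \<otimes> x) \<otimes> inv x"
  using assms by (simp add: comm_def m_assoc inv_mult_group)

lemma comm_left:
  assumes "a \<in> carrier G" "h \<in> carrier G"
  shows "comm G a h = a \<otimes> (h \<otimes> inv a \<otimes> inv h)"
  using assms by (simp add: comm_def m_assoc)

lemma rc_normal:
  assumes N: "N \<lhd> G" shows "rc G N \<lhd> G"
proof -
  have sg: "subgroup N G" and nc: "\<And>x h. x \<in> carrier G \<Longrightarrow> h \<in> N \<Longrightarrow> x \<otimes> h \<otimes> inv x \<in> N"
    using N normal_inv_iff by auto
  have Nc: "\<And>n. n \<in> N \<Longrightarrow> n \<in> carrier G" using sg subgroup.subset by blast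
  have "subgroup (rc G N) G"
  proof
    show "rc G N \<subseteq> carrier G" by (auto simp: rc_def)
  next
    fix a b assume a: "a \<in> rc G N" and b: "b \<in> rc G N"
    then have ac: "a \<in> carrier G" and bc: "b \<in> carrier G" by (auto simp: rc_def)
    show "a \<otimes> b \<in> rc G N" unfolding rc_def
    proof (safe)
      show "a \<otimes> b \<in> carrier G" using ac bc by simp
      fix h assume h: "h \<in> carrier G"
      have "comm G b h \<in> N" "comm G a h \<in> N" using a b h by (auto simp: rc_def)
      then show "comm G (a \<otimes> b) h \<in> N"
        using comm_mult[OF ac bc h] nc[OF ac] subgroup.m_closed[OF sg] by simp
    qed
  next
    show "\<one> \<in> rc G N" using sg by (auto simp: rc_def comm_def subgroup.one_closed)
  next
    fix a assume a: "a \<in> rc G N"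
    then have ac: "a \<in> carrier G" by (auto simp: rc_def)
    show "inv a \<in> rc G N" unfolding rc_def
    proof (safe)
      show "inv a \<in> carrier G" using ac by simp
      fix h assume h: "h \<in> carrier G"
      have "comm G a h \<in> N" using a h by (auto simp: rc_def)
      then have "inv (comm G a h) \<in> N" using subgroup.m_inv_closed[OF sg] by blast
      then have "inv a \<otimes> inv (comm G a h) \<otimes> inv (inv a) \<in> N" using nc[of "inv a"] ac by blast
      then show "comm G (inv a) h \<in> N" using comm_inv[OF ac h] ac by simp
    qed
  qed
  moreover have "\<forall>x\<in>carrier G. \<forall>a\<in>rc G N. x \<otimes> a \<otimes> inv x \<in> rc G N"
  proof (intro ballI)
    fix x a assume x: "x \<in> carrier G" and a: "a \<in> rc G N"
    then have ac: "a \<in> carrier G" by (auto simp: rc_def)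
    show "x \<otimes> a \<otimes> inv x \<in> rc G N" unfolding rc_def
    proof (safe)
      show "x \<otimes> a \<otimes> inv x \<in> carrier G" using ac x by simp
      fix h assume h: "h \<in> carrier G"
      have "comm G a (inv x \<otimes> h \<otimes> x) \<in> N" using a h x by (auto simp: rc_def)
      then show "comm G (x \<otimes> a \<otimes> inv x) h \<in> N" using comm_conj[OF ac x h] nc[OF x] by simp
    qed
  qed
  ultimately show ?thesis using normal_inv_iff by blast
qed

lemma sub_rc:
  assumes N: "N \<lhd> G" shows "N \<subseteq> rc G N"
proof
  fix n assume n: "n \<in> N"
  have sg: "subgroup N G" and nc: "\<And>x h. x \<in> carrier G \<Longrightarrow> h \<in> N \<Longrightarrow> x \<otimes> h \<otimes> inv x \<in> N"
    using N normal_inv_iff by auto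
  have nC: "n \<in> carrier G" using n sg subgroup.subset by blast
  show "n \<in> rc G N" unfolding rc_def
  proof (safe)
    show "n \<in> carrier G" by (fact nC)
    fix h assume h: "h \<in> carrier G"
    have "h \<otimes> inv n \<otimes> inv h \<in> N" using nc[OF h] n subgroup.m_inv_closed[OF sg] by blast
    then show "comm G n h \<in> N" using comm_left[OF nC h] subgroup.m_closed[OF sg] n by simp
  qed
qed

lemma zk_normal: "N \<lhd> G \<Longrightarrow> zk G N k \<lhd> G"
  by (induction k arbitrary: N) (auto simp: rc_normal)

lemma zk_Suc2: "zk G N (Suc k) = rc G (zk G N k)"
  by (induction k arbitrary: N) auto

lemma zk_mono: "N \<lhd> G \<Longrightarrow> zk G N k \<subseteq> zk G N (Suc k)"
  using sub_rc zk_normal zk_Suc2 by metis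

lemma zk_mono2: "N \<lhd> G \<Longrightarrow> k \<le> l \<Longrightarrow> zk G N k \<subseteq> zk G N l"
proof (induction l)
  case 0 then show ?case by simp
next
  case (Suc l) then show ?case using zk_mono[of N l] by (cases "k = Suc l") auto
qed

lemma conj_pow: "b \<in> carrier G \<Longrightarrow> a \<in> carrier G \<Longrightarrow>
   (b \<otimes> a \<otimes> inv b) [^] (e::nat) = b \<otimes> a [^] e \<otimes> inv b"
  by (induction e) (auto simp: m_assoc)

lemma zk_carrier: "N \<lhd> G \<Longrightarrow> zk G N k \<subseteq> carrier G"
  using zk_normal normal_imp_subgroup subgroup.subset by blast

theorem claim:
  "N \<lhd> G \<Longrightarrow> finite A \<Longrightarrow> A \<subseteq> zk G N k \<Longrightarrow> (\<forall>a\<in>A. \<exists>e::nat. e > 0 \<and> a [^] e \<in> N)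
    \<Longrightarrow> finite ((\<lambda>g. N #> g) ` generate G A)"
proof (induction k arbitrary: N)
  case 0
  have sg: "subgroup N G" using 0 normal_imp_subgroup by blast
  have "generate G A \<subseteq> N" using 0 generate_subgroup_incl[OF _ sg] by simp
  then have "(\<lambda>g. N #> g) ` generate G A \<subseteq> {N}"
    using subgroup.rcos_const[OF sg is_group] by blast
  then show ?case by (rule finite_subset) simp
next
  case (Suc k)
  have N: "N \<lhd> G" by fact
  have sg: "subgroup N G" using N normal_imp_subgroup by blast
  have nc: "\<And>x h. x \<in> carrier G \<Longrightarrow> h \<in> N \<Longrightarrow> x \<otimes> h \<otimes> inv x \<in> N"
    using N normal_inv_iff by auto
  define N' where "N' = rc G N"
  have N': "N' \<lhd> G" unfolding N'_def using rc_normal[OF N] .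
  have sg': "subgroup N' G" using N' normal_imp_subgroup by blast
  have NN': "N \<subseteq> N'" unfolding N'_def using sub_rc[OF N] .
  have Ac: "A \<subseteq> carrier G" using Suc.prems(3) zk_carrier[OF N] by blast
  define B where "B = generate G A"
  have Bsg: "subgroup B G" unfolding B_def using generate_is_subgroup[OF Ac] .
  have Bc: "B \<subseteq> carrier G" using Bsg subgroup.subset by blast
  have AB: "A \<subseteq> B" unfolding B_def by (auto intro: generate.incl)
  have IH: "finite ((\<lambda>g. N' #> g) ` B)"
  proof -
    have "A \<subseteq> zk G N' k" using Suc.prems(3) N'_def by simp
    moreover have "\<forall>a\<in>A. \<exists>e::nat. e > 0 \<and> a [^] e \<in> N'" using Suc.prems(4) NN' by blast
    ultimately show ?thesis unfolding B_def using Suc.IH[OF N' Suc.prems(2)] by blast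
  qed
  define F where "F = (\<lambda>c. SOME f. f \<in> B \<and> N' #> f = c) ` ((\<lambda>g. N' #> g) ` B)"
  have Ffin: "finite F" unfolding F_def using IH by (rule finite_imageI)
  have FB: "F \<subseteq> B"
  proof
    fix f assume "f \<in> F"
    then obtain b where b: "b \<in> B" "f = (SOME f. f \<in> B \<and> N' #> f = N' #> b)" unfolding F_def by blast
    then show "f \<in> B" using someI[of "\<lambda>f. f \<in> B \<and> N' #> f = N' #> b" b] by auto
  qed
  have Frep: "\<exists>f\<in>F. \<exists>n\<in>N'. b = n \<otimes> f" if b: "b \<in> B" for b
  proof -
    define f where "f = (SOME f. f \<in> B \<and> N' #> f = N' #> b)"
    have f: "f \<in> B \<and> N' #> f = N' #> b" unfolding f_def using someI[of "\<lambda>f. f \<in> B \<and> N' #> f = N' #> b" b] b by auto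
    have fF: "f \<in> F" unfolding F_def f_def using b by blast
    have bc: "b \<in> carrier G" and fc: "f \<in> carrier G" using b f Bc by auto
    have "b \<otimes> inv f \<in> N'" using f rcos_eq_iff[OF sg' bc fc] by simp
    moreover have "b = (b \<otimes> inv f) \<otimes> f" using bc fc by (simp add: m_assoc)
    ultimately show ?thesis using fF by blast
  qed
  define XX where "XX = {b \<otimes> a \<otimes> inv b | b a. b \<in> B \<and> a \<in> A}"
  have XXB: "XX \<subseteq> B"
  proof (unfold XX_def, safe)
    fix b a assume "b \<in> B" "a \<in> A"
    then show "b \<otimes> a \<otimes> inv b \<in> B" using AB subgroup.m_closed[OF Bsg] subgroup.m_inv_closed[OF Bsg] by blast
  qed
  have AXX: "A \<subseteq> XX"
  proof
    fix a assume a: "a \<in> A"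
    have "a = \<one> \<otimes> a \<otimes> inv \<one>" using a Ac by auto
    then show "a \<in> XX" unfolding XX_def using a subgroup.one_closed[OF Bsg] by blast
  qed
  have XXc: "XX \<subseteq> carrier G" using XXB Bc by blast
  define Q where "Q = G Mod N"
  interpret Q: group Q unfolding Q_def by (rule normal.factorgroup_is_group[OF N])
  have hom: "group_hom G Q (\<lambda>g. N #> g)"
    unfolding Q_def using normal.r_coset_hom_Mod[OF N] normal.factorgroup_is_group[OF N]
    by (simp add: group_hom_def group_hom_axioms_def is_group)
  define XQ where "XQ = (\<lambda>g. N #> g) ` XX"
  have XQfin: "finite XQ"
  proof -
    have "XQ \<subseteq> (\<lambda>(f, a). N #> (f \<otimes> a \<otimes> inv f)) ` (F \<times> A)"
    proof
      fix c assume "c \<in> XQ"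
      then obtain b a where ba: "b \<in> B" "a \<in> A" "c = N #> (b \<otimes> a \<otimes> inv b)"
        unfolding XQ_def XX_def by blast
      obtain f n where fn: "f \<in> F" "n \<in> N'" "b = n \<otimes> f" using Frep[OF ba(1)] by blast
      have fc: "f \<in> carrier G" using fn FB Bc by blast
      have nC: "n \<in> carrier G" using fn sg' subgroup.subset by blast
      have ac: "a \<in> carrier G" using ba Ac by blast
      define w where "w = f \<otimes> a \<otimes> inv f"
      have wc: "w \<in> carrier G" unfolding w_def using fc ac by simp
      have "b \<otimes> a \<otimes> inv b = n \<otimes> w \<otimes> inv n"
        unfolding w_def fn(3) using fc ac nC by (simp add: m_assoc inv_mult_group)
      moreover have "(n \<otimes> w \<otimes> inv n) \<otimes> inv w \<in> N"
      proof -
        have "comm G n w \<in> N" using fn(2) wc unfolding N'_def rc_def by blast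
        then show ?thesis by (simp add: comm_def)
      qed
      ultimately have "c = N #> w" using ba(3) rcos_eq_iff[OF sg _ wc] nC wc by simp
      then show "c \<in> (\<lambda>(f, a). N #> (f \<otimes> a \<otimes> inv f)) ` (F \<times> A)"
        unfolding w_def using fn(1) ba(2) by (intro image_eqI[where x="(f, a)"]) auto
    qed
    moreover have "finite ((\<lambda>(f, a). N #> (f \<otimes> a \<otimes> inv f)) ` (F \<times> A))"
      using Ffin Suc.prems(2) by (intro finite_imageI finite_cartesian_product)
    ultimately show ?thesis by (rule finite_subset)
  qed
  have XQc: "XQ \<subseteq> carrier Q"
    unfolding XQ_def Q_def using XXc by (auto simp: carrier_FactGroup)
  have XQcl: "a \<otimes>\<^bsub>Q\<^esub> b \<otimes>\<^bsub>Q\<^esub> inv\<^bsub>Q\<^esub> a \<in> XQ" if a: "a \<in> XQ" and b: "b \<in> XQ" for a b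
  proof -
    obtain x1 where x1: "x1 \<in> XX" "a = N #> x1" using a unfolding XQ_def by blast
    obtain x2 where x2: "x2 \<in> XX" "b = N #> x2" using b unfolding XQ_def by blast
    have c1: "x1 \<in> carrier G" and c2: "x2 \<in> carrier G" using x1 x2 XXc by auto
    have "a \<otimes>\<^bsub>Q\<^esub> b \<otimes>\<^bsub>Q\<^esub> inv\<^bsub>Q\<^esub> a = N #> (x1 \<otimes> x2 \<otimes> inv x1)"
      using x1 x2 c1 c2 group_hom.hom_mult[OF hom] group_hom.hom_inv[OF hom] by simp
    moreover have "x1 \<otimes> x2 \<otimes> inv x1 \<in> XX"
    proof -
      obtain b2 a2 where ba: "b2 \<in> B" "a2 \<in> A" "x2 = b2 \<otimes> a2 \<otimes> inv b2" using x2 unfolding XX_def by blast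
      have x1B: "x1 \<in> B" using x1 XXB by blast
      have b2c: "b2 \<in> carrier G" and a2c: "a2 \<in> carrier G" using ba Bc Ac by auto
      have "x1 \<otimes> x2 \<otimes> inv x1 = (x1 \<otimes> b2) \<otimes> a2 \<otimes> inv (x1 \<otimes> b2)"
        using ba(3) c1 b2c a2c by (simp add: m_assoc inv_mult_group)
      moreover have "x1 \<otimes> b2 \<in> B" using x1B ba(1) subgroup.m_closed[OF Bsg] by blast
      ultimately show ?thesis unfolding XX_def using ba(2) by blast
    qed
    ultimately show ?thesis unfolding XQ_def by blast
  qed
  have XQtor: "\<exists>e>0. x [^]\<^bsub>Q\<^esub> (e::nat) = \<one>\<^bsub>Q\<^esub>" if x: "x \<in> XQ" for x
  proof -
    obtain y where y: "y \<in> XX" "x = N #> y" using x unfolding XQ_def by blast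
    obtain b a where ba: "b \<in> B" "a \<in> A" "y = b \<otimes> a \<otimes> inv b" using y unfolding XX_def by blast
    have bc: "b \<in> carrier G" and ac: "a \<in> carrier G" using ba Bc Ac by auto
    obtain e where e: "e > 0" "a [^] (e::nat) \<in> N" using Suc.prems(4) ba(2) by blast
    have "y [^] e \<in> N" using ba(3) conj_pow[OF bc ac] nc[OF bc e(2)] by simp
    moreover have "x [^]\<^bsub>Q\<^esub> e = N #> (y [^] e)"
      unfolding Q_def y(2) using normal.FactGroup_pow[OF N] y XXc by blast
    ultimately have "x [^]\<^bsub>Q\<^esub> e = \<one>\<^bsub>Q\<^esub>"
      unfolding Q_def using subgroup.rcos_const[OF sg is_group] by simp
    then show ?thesis using e(1) by blast
  qed
  have "finite (generate Q XQ)" by (rule Q.dietzmann[OF XQc XQfin XQcl XQtor])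
  moreover have "(\<lambda>g. N #> g) ` generate G A \<subseteq> generate Q XQ"
  proof -
    have "generate G A \<subseteq> generate G XX" using mono_generate[OF AXX] .
    moreover have "generate Q XQ = (\<lambda>g. N #> g) ` generate G XX"
      unfolding XQ_def by (rule group_hom.generate_img[OF hom XXc])
    ultimately show ?thesis by blast
  qed
  ultimately show ?case by (meson finite_subset)
qed

end



fun itc :: "('a,'b) monoid_scheme \<Rightarrow> 'a \<Rightarrow> 'a list \<Rightarrow> 'a" where
  "itc G u [] = u"
| "itc G u (t # ts) = itc G (comm G u t) ts"

context group begin

lemma itc_append: "itc G u (ts @ [t]) = comm G (itc G u ts) t"
  by (induction ts arbitrary: u) auto

lemma itc_closed: "u \<in> carrier G \<Longrightarrow> set ts \<subseteq> carrier G \<Longrightarrow> itc G u ts \<in> carrier G"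
  by (induction ts arbitrary: u) auto

lemma itc_zk: "u \<in> zk G {\<one>} j \<Longrightarrow> set ts \<subseteq> carrier G \<Longrightarrow> itc G u ts \<in> zk G {\<one>} (j - length ts)"
proof (induction ts arbitrary: u j)
  case Nil then show ?case by simp
next
  case (Cons t ts)
  have tc: "t \<in> carrier G" using Cons by simp
  show ?case
  proof (cases j)
    case 0
    then have "u = \<one>" using Cons by simp
    then have "comm G u t = \<one>" using tc by (simp add: comm_def)
    then have "comm G u t \<in> zk G {\<one>} 0" by simp
    then show ?thesis using Cons.IH[of "comm G u t" 0] Cons.prems 0 by simp
  next
    case (Suc j')
    then have "u \<in> rc G (zk G {\<one>} j')" using Cons.prems zk_Suc2 by simp
    then have "comm G u t \<in> zk G {\<one>} j'" using tc by (auto simp: rc_def)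
    then show ?thesis using Cons.IH[of "comm G u t" j'] Cons.prems Suc by simp
  qed
qed

lemma finite_subgroup_torsion:
  assumes "subgroup K G" "finite K" "c \<in> K"
  shows "\<exists>e>0. c [^] (e::nat) = \<one>"
proof -
  have cc: "c \<in> carrier G" using assms subgroup.subset by blast
  have img: "(\<lambda>i::nat. c [^] i) ` {..card K} \<subseteq> K"
  proof
    fix g assume "g \<in> (\<lambda>i::nat. c [^] i) ` {..card K}"
    then obtain i :: nat where "g = c [^] i" by blast
    moreover have "c [^] (i::nat) \<in> K"
    proof (induction i)
      case 0 then show ?case using subgroup.one_closed[OF assms(1)] by simp
    next
      case (Suc i) then show ?case using subgroup.m_closed[OF assms(1)] assms(3) by simp
    qed
    ultimately show "g \<in> K" by simp
  qed
  have "card ((\<lambda>i::nat. c [^] i) ` {..card K}) \<le> card K" using card_mono[OF assms(2) img] .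
  then have "\<not> inj_on (\<lambda>i::nat. c [^] i) {..card K}" using pigeonhole[of "(\<lambda>i::nat. c [^] i)" "{..card K}"] by simp
  then obtain i j where ij: "i \<le> card K" "j \<le> card K" "i \<noteq> j" "c [^] (i::nat) = c [^] j"
    unfolding inj_on_def by auto
  have gen: "c [^] (b - a) = \<one>" if "a < b" "c [^] (a::nat) = c [^] b" for a b
  proof -
    have "c [^] a \<otimes> c [^] (b - a) = c [^] b" using that(1) cc nat_pow_mult[of c a "b - a"] by simp
    then have "c [^] a \<otimes> c [^] (b - a) = c [^] a" using that(2) by simp
    then show ?thesis using cc by simp
  qed
  show ?thesis
  proof (cases "i < j")
    case True then show ?thesis using gen[of i j] ij by (intro exI[of _ "j - i"]) auto
  next
    case False then have "j < i" using ij by simp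
    then show ?thesis using gen[of j i] ij by (intro exI[of _ "i - j"]) auto
  qed
qed

lemma finite_gen_one:
  assumes "finite A" "A \<subseteq> zk G {\<one>} k" "\<forall>a\<in>A. \<exists>e::nat. e > 0 \<and> a [^] e = \<one>"
  shows "finite (generate G A)"
proof -
  have "finite ((\<lambda>g. {\<one>} #> g) ` generate G A)"
    using claim[OF one_is_normal assms(1,2)] assms(3) by simp
  moreover have Ac: "A \<subseteq> carrier G" using assms(2) zk_carrier[OF one_is_normal] by blast
  moreover have "inj_on (\<lambda>g. {\<one>} #> g) (generate G A)"
  proof (rule inj_onI)
    fix a b assume "a \<in> generate G A" "b \<in> generate G A" "{\<one>} #> a = {\<one>} #> b"
    moreover have "a \<in> carrier G" "b \<in> carrier G" using calculation Ac generate_in_carrier by auto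
    ultimately show "a = b" by (simp add: r_coset_def)
  qed
  ultimately show ?thesis using finite_image_iff[of "\<lambda>g. {\<one>} #> g" "generate G A"] by simp
qed

lemma comm_torsion:
  assumes c: "c \<in> zk G {\<one>} k" and e: "e > 0" "c [^] (e::nat) = \<one>" and t: "t \<in> carrier G"
  shows "\<exists>e>0. comm G c t [^] (e::nat) = \<one>"
proof -
  have Z: "zk G {\<one>} k \<lhd> G" using zk_normal[OF one_is_normal] .
  have cc: "c \<in> carrier G" using c zk_carrier[OF one_is_normal] by blast
  have ic: "inv c \<in> zk G {\<one>} k" using subgroup.m_inv_closed[OF normal_imp_subgroup[OF Z] c] .
  have d: "t \<otimes> inv c \<otimes> inv t \<in> zk G {\<one>} k" using Z ic t unfolding normal_inv_iff by simp
  have "(t \<otimes> inv c \<otimes> inv t) [^] e = t \<otimes> inv (c [^] e) \<otimes> inv t"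
    using conj_pow[OF t, of "inv c"] cc nat_pow_inv by simp
  then have dt: "(t \<otimes> inv c \<otimes> inv t) [^] e = \<one>" using e t by simp
  define A where "A = {c, t \<otimes> inv c \<otimes> inv t}"
  have "finite (generate G A)"
  proof (rule finite_gen_one[of _ k])
    show "finite A" by (simp add: A_def)
    show "A \<subseteq> zk G {\<one>} k" using c d by (simp add: A_def)
    show "\<forall>a\<in>A. \<exists>e::nat. e > 0 \<and> a [^] e = \<one>" using e dt by (auto simp: A_def)
  qed
  moreover have Ac: "A \<subseteq> carrier G" using cc t by (auto simp: A_def)
  moreover have "comm G c t \<in> generate G A"
  proof -
    have "c \<in> A" "t \<otimes> inv c \<otimes> inv t \<in> A" by (simp_all add: A_def)
    then have "c \<in> generate G A" "t \<otimes> inv c \<otimes> inv t \<in> generate G A" by (simp_all add: generate.incl)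
    then have "c \<otimes> (t \<otimes> inv c \<otimes> inv t) \<in> generate G A" by (rule generate.eng)
    then show ?thesis using cc t by (simp add: comm_def m_assoc)
  qed
  ultimately show ?thesis using finite_subgroup_torsion[OF generate_is_subgroup[OF Ac]] by simp
qed

lemma conj_gen_closed:
  assumes Cc: "C \<subseteq> carrier G" and t: "t \<in> carrier G"
    and cl: "\<And>c. c \<in> C \<Longrightarrow> t \<otimes> c \<otimes> inv t \<in> generate G C"
  shows "m \<in> generate G C \<Longrightarrow> t \<otimes> m \<otimes> inv t \<in> generate G C"
proof (induction rule: generate.induct)
  case one then show ?case using t generate.one by simp
next
  case (incl h) then show ?case using cl by simp
next
  case (inv h)
  have hc: "h \<in> carrier G" using inv Cc by blast
  have "t \<otimes> inv h \<otimes> inv t = inv (t \<otimes> h \<otimes> inv t)" using hc t by (simp add: inv_mult_group m_assoc)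
  then show ?case using generate_m_inv_closed[OF Cc cl[OF inv]] by simp
next
  case (eng h1 h2)
  have c1: "h1 \<in> carrier G" "h2 \<in> carrier G" using eng generate_in_carrier[OF Cc] by auto
  have "t \<otimes> (h1 \<otimes> h2) \<otimes> inv t = (t \<otimes> h1 \<otimes> inv t) \<otimes> (t \<otimes> h2 \<otimes> inv t)"
    using c1 t by (simp add: m_assoc)
  then show ?case using generate.eng[OF eng.IH] by simp
qed

lemma key:
  assumes S: "finite S" "S \<subseteq> carrier G" "generate G S = carrier G"
    and xy: "x \<in> zk G {\<one>} K" "y \<in> zk G {\<one>} K"
    and tx: "\<exists>e>0. x [^] (e::nat) = \<one>" and ty: "\<exists>e>0. y [^] (e::nat) = \<one>"
  shows "\<exists>M. finite M \<and> subgroup M G \<and> x \<in> M \<and> y \<in> M \<and> (\<forall>g\<in>carrier G. \<forall>m\<in>M. g \<otimes> m \<otimes> inv g \<in> M)"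
proof -
  have Z1: "{\<one>} \<lhd> G" by (rule one_is_normal)
  define T where "T = S \<union> (\<lambda>s. inv s) ` S"
  have Tfin: "finite T" unfolding T_def using S(1) by simp
  have Tc: "T \<subseteq> carrier G" unfolding T_def using S(2) by auto
  define C where "C = {itc G u ts | u ts. u \<in> {x, y} \<and> set ts \<subseteq> T}"
  have xyc: "x \<in> carrier G" "y \<in> carrier G" using xy zk_carrier[OF Z1] by auto
  have CZ: "C \<subseteq> zk G {\<one>} K"
  proof
    fix c assume "c \<in> C"
    then obtain u ts where u: "u \<in> {x, y}" "set ts \<subseteq> T" "c = itc G u ts" unfolding C_def by blast
    have "u \<in> zk G {\<one>} K" using u xy by auto
    then have "c \<in> zk G {\<one>} (K - length ts)" using itc_zk u Tc by auto
    then show "c \<in> zk G {\<one>} K" using zk_mono2[OF Z1, of "K - length ts" K] by auto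
  qed
  have Cc: "C \<subseteq> carrier G" using CZ zk_carrier[OF Z1] by blast
  have tor_itc: "\<And>u. u \<in> zk G {\<one>} K \<Longrightarrow> (\<exists>e>0. u [^] (e::nat) = \<one>) \<Longrightarrow>
      (\<exists>e>0. itc G u ts [^] (e::nat) = \<one>)" if "set ts \<subseteq> T" for ts
    using that
  proof (induction ts)
    case Nil then show ?case by simp
  next
    case (Cons t ts)
    have tc: "t \<in> carrier G" using Cons Tc by auto
    have "comm G u t \<in> zk G {\<one>} K"
    proof -
      have "u \<in> zk G {\<one>} (Suc K)" using Cons.prems(1) zk_mono[OF Z1] by blast
      then have "u \<in> rc G (zk G {\<one>} K)" by (simp only: zk_Suc2)
      then show ?thesis using tc by (simp add: rc_def)
    qed
    moreover have "\<exists>e>0. comm G u t [^] (e::nat) = \<one>" using comm_torsion[OF Cons.prems(1) _ _ tc] Cons.prems(2) by blast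
    ultimately show ?case using Cons.IH Cons.prems(3) by simp
  qed
  have Ctor: "\<forall>c\<in>C. \<exists>e::nat. e > 0 \<and> c [^] e = \<one>"
  proof
    fix c assume "c \<in> C"
    then obtain u ts where u: "u \<in> {x, y}" "set ts \<subseteq> T" "c = itc G u ts" unfolding C_def by blast
    have "u \<in> zk G {\<one>} K" "\<exists>e>0. u [^] (e::nat) = \<one>" using u xy tx ty by auto
    then show "\<exists>e::nat. e > 0 \<and> c [^] e = \<one>" using tor_itc[OF u(2)] u(3) by blast
  qed
  have Cfin: "finite C"
  proof -
    have "C \<subseteq> insert \<one> ((\<lambda>(u, ts). itc G u ts) ` ({x, y} \<times> {ts. set ts \<subseteq> T \<and> length ts \<le> K}))"
    proof
      fix c assume "c \<in> C"
      then obtain u ts where u: "u \<in> {x, y}" "set ts \<subseteq> T" "c = itc G u ts" unfolding C_def by blast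
      show "c \<in> insert \<one> ((\<lambda>(u, ts). itc G u ts) ` ({x, y} \<times> {ts. set ts \<subseteq> T \<and> length ts \<le> K}))"
      proof (cases "length ts \<le> K")
        case True then show ?thesis using u by (intro insertI2 image_eqI[where x="(u, ts)"]) auto
      next
        case False
        have "u \<in> zk G {\<one>} K" using u xy by auto
        then have "c \<in> zk G {\<one>} (K - length ts)" using itc_zk u Tc by auto
        then show ?thesis using False by simp
      qed
    qed
    moreover have "finite (insert \<one> ((\<lambda>(u, ts). itc G u ts) ` ({x, y} \<times> {ts. set ts \<subseteq> T \<and> length ts \<le> K})))"
      using finite_lists_length_le[OF Tfin, of K] by simp
    ultimately show ?thesis by (rule finite_subset)
  qed
  define M where "M = generate G C"
  have Mfin: "finite M" unfolding M_def by (rule finite_gen_one[OF Cfin CZ Ctor])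
  have Msg: "subgroup M G" unfolding M_def by (rule generate_is_subgroup[OF Cc])
  have "x = itc G x [] \<and> (x = x \<or> x = y) \<and> set [] \<subseteq> T" "y = itc G y [] \<and> (y = x \<or> y = y) \<and> set [] \<subseteq> T" by simp_all
  then have xyC: "x \<in> C" "y \<in> C" unfolding C_def by blast+
  have xyM: "x \<in> M" "y \<in> M" using xyC unfolding M_def by (simp_all add: generate.incl)
  have Tnorm: "t \<otimes> m \<otimes> inv t \<in> M" if t: "t \<in> T" and m: "m \<in> M" for t m
  proof -
    have tc: "t \<in> carrier G" using t Tc by blast
    have "t \<otimes> c \<otimes> inv t \<in> generate G C" if c: "c \<in> C" for c
    proof -
      obtain u ts where u: "u \<in> {x, y}" "set ts \<subseteq> T" "c = itc G u ts" using c unfolding C_def by blast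
      have cc: "c \<in> carrier G" using c Cc by blast
      have "comm G c t \<in> C" unfolding C_def using u t itc_append[of u ts t]
        by (intro CollectI exI[of _ u] exI[of _ "ts @ [t]"]) auto
      then have "inv (comm G c t) \<otimes> c \<in> generate G C"
        using generate_m_inv_closed[OF Cc] generate.incl[of _ C G] c generate.eng by metis
      moreover have "inv (comm G c t) \<otimes> c = t \<otimes> c \<otimes> inv t"
        using cc tc by (simp add: comm_def inv_mult_group m_assoc)
      ultimately show ?thesis by simp
    qed
    then show ?thesis using conj_gen_closed[OF Cc tc] m unfolding M_def by blast
  qed
  have "g \<otimes> m \<otimes> inv g \<in> M" if g: "g \<in> generate G S" and m: "m \<in> M" for g m
    using g m
  proof (induction arbitrary: m rule: generate.induct)
    case one then show ?case using Msg subgroup.subset by fastforce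
  next
    case (incl h) then show ?case using Tnorm[of h m] T_def by blast
  next
    case (inv h) then show ?case using Tnorm[of "inv h" m] T_def by blast
  next
    case (eng h1 h2)
    have c1: "h1 \<in> carrier G" "h2 \<in> carrier G" using eng generate_in_carrier[OF S(2)] by auto
    have mc: "m \<in> carrier G" using eng Msg subgroup.subset by blast
    have "h2 \<otimes> m \<otimes> inv h2 \<in> M" using eng.IH(2) eng.prems by blast
    then have "h1 \<otimes> (h2 \<otimes> m \<otimes> inv h2) \<otimes> inv h1 \<in> M" using eng.IH(1) by blast
    moreover have "h1 \<otimes> (h2 \<otimes> m \<otimes> inv h2) \<otimes> inv h1 = h1 \<otimes> h2 \<otimes> m \<otimes> inv (h1 \<otimes> h2)"
      using c1 mc by (simp add: m_assoc inv_mult_group)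
    ultimately show ?case by simp
  qed
  then show ?thesis using Mfin Msg xyM S(3) by blast
qed

end



context group begin

lemma comm_mult_right:
  assumes "u \<in> carrier G" "a \<in> carrier G" "b \<in> carrier G"
  shows "comm G u (a \<otimes> b) = comm G u a \<otimes> (a \<otimes> comm G u b \<otimes> inv a)"
  using assms by (simp add: comm_def m_assoc inv_mult_group)

lemma finite_by_centralizer:
  assumes Mf: "finite M" and Mc: "M \<subseteq> carrier G"
    and nm: "\<And>g m. g \<in> carrier G \<Longrightarrow> m \<in> M \<Longrightarrow> g \<otimes> m \<otimes> inv g \<in> M"
    and cen: "\<And>z. z \<in> carrier G \<Longrightarrow> (\<forall>m\<in>M. z \<otimes> m = m \<otimes> z) \<Longrightarrow> z \<in> M"
  shows "finite (carrier G)"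
proof -
  define \<phi> where "\<phi> g = restrict (\<lambda>m. g \<otimes> m \<otimes> inv g) M" for g
  have \<phi>in: "\<phi> g \<in> PiE M (\<lambda>_. M)" if "g \<in> carrier G" for g
    unfolding \<phi>_def using nm that by auto
  have sub: "\<phi> ` carrier G \<subseteq> PiE M (\<lambda>_. M)" using \<phi>in by blast
  have fin: "finite (\<phi> ` carrier G)"
    by (rule finite_subset[OF sub finite_PiE[OF Mf Mf]])
  define R where "R = (\<lambda>f. SOME g. g \<in> carrier G \<and> \<phi> g = f) ` (\<phi> ` carrier G)"
  have Rfin: "finite R" unfolding R_def using fin by (rule finite_imageI)
  have "carrier G \<subseteq> (\<lambda>(r, m). r \<otimes> m) ` (R \<times> M)"
  proof
    fix g assume g: "g \<in> carrier G"
    define r where "r = (SOME r. r \<in> carrier G \<and> \<phi> r = \<phi> g)"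
    have r: "r \<in> carrier G \<and> \<phi> r = \<phi> g" unfolding r_def using someI[of "\<lambda>r. r \<in> carrier G \<and> \<phi> r = \<phi> g" g] g by blast
    have rR: "r \<in> R" unfolding R_def r_def using g by blast
    have eq: "r \<otimes> m \<otimes> inv r = g \<otimes> m \<otimes> inv g" if m: "m \<in> M" for m
    proof -
      have "\<phi> r m = \<phi> g m" using r by simp
      then show ?thesis unfolding \<phi>_def using m by simp
    qed
    define z where "z = inv r \<otimes> g"
    have zc: "z \<in> carrier G" unfolding z_def using r g by simp
    have "z \<otimes> m = m \<otimes> z" if m: "m \<in> M" for m
    proof -
      have mc: "m \<in> carrier G" using m Mc by blast
      have "inv r \<otimes> (r \<otimes> m \<otimes> inv r) \<otimes> g = inv r \<otimes> (g \<otimes> m \<otimes> inv g) \<otimes> g" using eq[OF m] by simp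
      then show ?thesis unfolding z_def using r g mc by (simp add: m_assoc)
    qed
    then have "z \<in> M" using cen[OF zc] by blast
    moreover have "g = r \<otimes> z" unfolding z_def using r g by (simp add: m_assoc[symmetric])
    ultimately show "g \<in> (\<lambda>(r, m). r \<otimes> m) ` (R \<times> M)" using rR by (intro image_eqI[where x="(r, z)"]) auto
  qed
  moreover have "finite ((\<lambda>(r, m). r \<otimes> m) ` (R \<times> M))" using Rfin Mf by (intro finite_imageI finite_cartesian_product)
  ultimately show ?thesis by (rule finite_subset)
qed

end

lemma mono_ucs: "mono (upper_central_step G)"
  by (rule monoI) (auto simp: upper_central_step_def)

lemma hyp_zk:
  fixes G (structure)
  assumes grp: "group G" and S: "finite S" "S \<subseteq> carrier G"
    and u: "u \<in> hypercenter G" "u \<in> generate G S"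
  shows "\<exists>k. u \<in> zk (G\<lparr>carrier := generate G S\<rparr>) {\<one>\<^bsub>G\<^esub>} k"
proof -
  interpret group G by fact
  define H where "H = generate G S"
  define L where "L = G\<lparr>carrier := H\<rparr>"
  have Hsg: "subgroup H G" unfolding H_def by (rule generate_is_subgroup[OF S(2)])
  interpret L: group L unfolding L_def by (rule subgroup.subgroup_is_group[OF Hsg is_group])
  have Hc: "H \<subseteq> carrier G" using Hsg subgroup.subset by blast
  have cL: "carrier L = H" "one L = \<one>" "monoid.mult L = monoid.mult G" unfolding L_def by simp_all
  have invL: "inv\<^bsub>L\<^esub> h = inv h" if "h \<in> H" for h unfolding L_def using m_inv_consistent[OF Hsg that] .
  have commL: "comm L a b = comm G a b" if "a \<in> H" "b \<in> H" for a b
    using that invL Hsg by (simp add: comm_def cL subgroup.m_inv_closed)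
  have Z1: "{\<one>\<^bsub>L\<^esub>} \<lhd> L" by (rule L.one_is_normal)
  define P where "P u \<longleftrightarrow> (u \<in> H \<longrightarrow> (\<exists>k. u \<in> zk L {\<one>} k))" for u
  have "P u"
  proof (rule lfp_induct_set[OF u(1)[unfolded hypercenter_def] mono_ucs])
    fix u assume "u \<in> upper_central_step G (lfp (upper_central_step G) \<inter> {x. P x})"
    then have cases: "u = \<one> \<or> (u \<in> carrier G \<and> (\<forall>x\<in>carrier G. P (u \<otimes> x \<otimes> inv u \<otimes> inv x)))"
      unfolding upper_central_step_def by auto
    show "P u" unfolding P_def
    proof
      assume uH: "u \<in> H"
      show "\<exists>k. u \<in> zk L {\<one>} k"
      proof (cases "u = \<one>")
        case True then show ?thesis by (intro exI[of _ 0]) simp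
      next
        case False
        then have uc: "u \<in> carrier G" and Pc: "\<And>x. x \<in> carrier G \<Longrightarrow> P (comm G u x)"
          using cases by (auto simp: comm_def)
        define T where "T = S \<union> (\<lambda>s. inv s) ` S"
        have Tfin: "finite T" unfolding T_def using S(1) by simp
        have TH: "T \<subseteq> H"
        proof
          fix t assume "t \<in> T"
          then consider "t \<in> S" | s where "s \<in> S" "t = inv s" unfolding T_def by blast
          then show "t \<in> H"
          proof cases
            case 1 then show ?thesis unfolding H_def by (rule generate.incl)
          next
            case 2 then show ?thesis unfolding H_def using generate.inv[of s S G] by simp
          qed
        qed
        have ex: "\<exists>k. comm G u t \<in> zk L {\<one>} k" if t: "t \<in> T" for t
        proof -
          have tH: "t \<in> H" using t TH by blast
          have "comm G u t \<in> H" unfolding comm_def using uH tH by (simp add: subgroup.m_closed[OF Hsg] subgroup.m_inv_closed[OF Hsg])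
          then show ?thesis using Pc[of t] tH Hc unfolding P_def by blast
        qed
        define kf where "kf t = (SOME k. comm G u t \<in> zk L {\<one>} k)" for t
        define K where "K = Max (insert 0 (kf ` T))"
        have inK: "comm G u t \<in> zk L {\<one>} K" if t: "t \<in> T" for t
        proof -
          have "comm G u t \<in> zk L {\<one>} (kf t)" unfolding kf_def using someI_ex[OF ex[OF t]] .
          moreover have "kf t \<le> K" unfolding K_def using Tfin t by simp
          ultimately show ?thesis using L.zk_mono2[OF Z1, of "kf t" K] cL by auto
        qed
        have ZK: "zk L {\<one>} K \<lhd> L" using L.zk_normal[OF Z1] cL by simp
        have ZKsg: "subgroup (zk L {\<one>} K) L" using ZK normal_imp_subgroup by blast
        have all: "comm G u h \<in> zk L {\<one>} K" if h: "h \<in> H" for h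
          using h[unfolded H_def]
        proof (induction rule: generate.induct)
          case one
          have "comm G u \<one> = \<one>" using uc by (simp add: comm_def)
          then show ?case using subgroup.one_closed[OF ZKsg] cL by simp
        next
          case (incl h) then show ?case using inK T_def by blast
        next
          case (inv h) then show ?case using inK T_def by blast
        next
          case (eng h1 h2)
          have h12: "h1 \<in> H" "h2 \<in> H" using eng unfolding H_def by auto
          have c: "h1 \<in> carrier G" "h2 \<in> carrier G" using h12 Hc by auto
          have "h1 \<otimes>\<^bsub>L\<^esub> comm G u h2 \<otimes>\<^bsub>L\<^esub> inv\<^bsub>L\<^esub> h1 \<in> zk L {\<one>} K"
          proof -
            have "\<forall>x\<in>carrier L. \<forall>h\<in>zk L {\<one>} K. x \<otimes>\<^bsub>L\<^esub> h \<otimes>\<^bsub>L\<^esub> inv\<^bsub>L\<^esub> x \<in> zk L {\<one>} K"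
              using ZK L.normal_inv_iff by blast
            then show ?thesis using eng.IH(2) h12 cL by simp
          qed
          then have "h1 \<otimes> comm G u h2 \<otimes> inv h1 \<in> zk L {\<one>} K" using invL h12 cL by simp
          then have "comm G u h1 \<otimes>\<^bsub>L\<^esub> (h1 \<otimes> comm G u h2 \<otimes> inv h1) \<in> zk L {\<one>} K"
            using subgroup.m_closed[OF ZKsg eng.IH(1)] by blast
          then show ?case using comm_mult_right[OF uc c] cL by simp
        qed
        have "u \<in> rc L (zk L {\<one>} K)"
          unfolding rc_def using uH all commL cL by auto
        then show ?thesis using L.zk_Suc2 cL by (intro exI[of _ "Suc K"]) simp
      qed
    qed
  qed
  then show ?thesis using u(2) unfolding P_def H_def L_def by simp
qed


theorem corollary5p5:
  fixes G (structure)
  assumes "group G"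
    and "locally_soluble G"
    and "\<And>H. \<lbrakk> subgroup H G; \<exists>a\<in>H. \<exists>b\<in>H. a \<otimes> b \<noteq> b \<otimes> a \<rbrakk>
              \<Longrightarrow> centralizer_set G H \<subseteq> H"
    and "\<exists>x\<in>hypercenter G. \<exists>y\<in>hypercenter G.
           finite_order_elem G x \<and> finite_order_elem G y \<and> x \<otimes> y \<noteq> y \<otimes> x"
  shows "locally_finite_group G"
proof -
  interpret group G by fact
  obtain x y where x: "x \<in> hypercenter G" and y: "y \<in> hypercenter G"
    and fx: "finite_order_elem G x" and fy: "finite_order_elem G y" and nc: "x \<otimes> y \<noteq> y \<otimes> x"
    using assms(4) by blast
  have xc: "x \<in> carrier G" and yc: "y \<in> carrier G" using fx fy by (auto simp: finite_order_elem_def)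
  have tx: "\<exists>e>0. x [^] (e::nat) = \<one>" and ty: "\<exists>e>0. y [^] (e::nat) = \<one>"
    using fx fy by (auto simp: finite_order_elem_def)
  define H0 where "H0 = generate G {x, y}"
  have H0sg: "subgroup H0 G" unfolding H0_def using xc yc by (intro generate_is_subgroup) auto
  have xyH0: "x \<in> H0" "y \<in> H0" unfolding H0_def by (simp_all add: generate.incl)
  have cenH0: "centralizer_set G H0 \<subseteq> H0"
    using assms(3)[OF H0sg] xyH0 nc by blast
  show ?thesis unfolding locally_finite_group_def
  proof (intro allI impI)
    fix S assume S: "S \<subseteq> carrier G \<and> finite S"
    define S' where "S' = insert x (insert y S)"
    have S'f: "finite S'" unfolding S'_def using S by simp
    have S'c: "S' \<subseteq> carrier G" unfolding S'_def using S xc yc by simp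
    define H where "H = generate G S'"
    define L where "L = G\<lparr>carrier := H\<rparr>"
    have Hsg: "subgroup H G" unfolding H_def by (rule generate_is_subgroup[OF S'c])
    interpret L: group L unfolding L_def by (rule subgroup.subgroup_is_group[OF Hsg is_group])
    have Hc: "H \<subseteq> carrier G" using Hsg subgroup.subset by blast
    have cL: "carrier L = H" "one L = \<one>" "monoid.mult L = monoid.mult G" unfolding L_def by simp_all
    have invL: "inv\<^bsub>L\<^esub> h = inv h" if "h \<in> H" for h unfolding L_def using m_inv_consistent[OF Hsg that] .
    have powL: "a [^]\<^bsub>L\<^esub> (n::nat) = a [^] n" for a n unfolding L_def using nat_pow_consistent[of a n H] by simp
    have xyH: "x \<in> H" "y \<in> H" unfolding H_def S'_def by (simp_all add: generate.incl)
    obtain kx where kx: "x \<in> zk L {\<one>} kx" using hyp_zk[OF assms(1) S'f S'c x] xyH unfolding H_def L_def by blast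
    obtain ky where ky: "y \<in> zk L {\<one>} ky" using hyp_zk[OF assms(1) S'f S'c y] xyH unfolding H_def L_def by blast
    have Z1: "{\<one>\<^bsub>L\<^esub>} \<lhd> L" by (rule L.one_is_normal)
    have xK: "x \<in> zk L {\<one>} (max kx ky)" using L.zk_mono2[OF Z1, of kx "max kx ky"] kx cL by auto
    have yK: "y \<in> zk L {\<one>} (max kx ky)" using L.zk_mono2[OF Z1, of ky "max kx ky"] ky cL by auto
    have S'H0: "S' \<subseteq> H" unfolding H_def using generate.incl[of _ S' G] by blast
    have genL: "generate L S' = carrier L"
    proof -
      have "generate L S' = generate G S'" unfolding L_def using generate_consistent[OF S'H0 Hsg] by simp
      then show ?thesis using cL H_def by simp
    qed
    have S'H: "S' \<subseteq> carrier L" using S'H0 cL by simp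
    obtain M where M: "finite M" "subgroup M L" "x \<in> M" "y \<in> M"
      and Mn: "\<forall>g\<in>carrier L. \<forall>m\<in>M. g \<otimes>\<^bsub>L\<^esub> m \<otimes>\<^bsub>L\<^esub> inv\<^bsub>L\<^esub> g \<in> M"
      using L.key[OF S'f S'H genL, of x "max kx ky" y] xK yK tx ty powL cL by auto
    have MH: "M \<subseteq> H" using M(2) subgroup.subset cL by blast
    have H0M: "H0 \<subseteq> M"
    proof -
      have "generate L {x, y} \<subseteq> M" using L.generate_subgroup_incl[OF _ M(2)] M(3,4) by simp
      moreover have "generate L {x, y} = generate G {x, y}"
        unfolding L_def using generate_consistent[OF _ Hsg] xyH by simp
      ultimately show ?thesis unfolding H0_def by simp
    qed
    have "finite (carrier L)"
    proof (rule L.finite_by_centralizer[OF M(1)])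
      show "M \<subseteq> carrier L" using MH cL by simp
      show "\<And>g m. g \<in> carrier L \<Longrightarrow> m \<in> M \<Longrightarrow> g \<otimes>\<^bsub>L\<^esub> m \<otimes>\<^bsub>L\<^esub> inv\<^bsub>L\<^esub> g \<in> M" using Mn by blast
      fix z assume z: "z \<in> carrier L" and zc: "\<forall>m\<in>M. z \<otimes>\<^bsub>L\<^esub> m = m \<otimes>\<^bsub>L\<^esub> z"
      have "z \<in> centralizer_set G H0"
        unfolding centralizer_set_def using z zc H0M cL Hc by auto
      then show "z \<in> M" using cenH0 H0M by blast
    qed
    then have "finite H" using cL by simp
    moreover have "generate G S \<subseteq> H" unfolding H_def S'_def by (rule mono_generate) blast
    ultimately show "finite (generate G S)" by (rule finite_subset[rotated])
  qed
qed



end
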